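(* Let $G$ be a digraph of directed tree-width at most $k$. Then there is a directed tree-decomposition $(T,\mathcal{X},\mathcal{W})$, $T=(V_T,E_T)$, of $G$ of width at most $k$ such that $|W_r|=1$ for every $r\in V_T$.
   Context: Digraphs are finite, without loops or multiple arcs. An out-tree is a digraph whose underlying graph is a tree, with a root such that all arcs are directed away from it; $u\le v$ means there is a directed path with $\ge0$ arcs from $u$ to $v$. For $Z\subseteq V$, a set $S\subseteq V$ is $Z$-normal if there is no directed walk in $G-Z$ with first and last vertices in $S$ that uses a vertex of $G-(Z\cup S)$. A directed tree-decomposition of $G=(V,E)$ is a triple $(T,\mathcal{X},\mathcal{W})$ with $T=(V_T,E_T)$ an out-tree, $\mathcal{X}=\{X_e:e\in E_T\}$ and $\mathcal{W}=\{W_r:r\in V_T\}$ subsets of $V$, such that $\mathcal{W}$ is a partition of $V$ into nonempty sets and for every $(u,v)\in E_T$ the set $\bigcup\{W_r: r\in V_T, v\le r\}$ is $X_{(u,v)}$-normal. Its width is $\max_{r\in V_T}|W_r\cup\bigcup_{e\sim r}X_e|-1$ ($e\sim r$: $r$ is an end vertex of $e$); the directed tree-width is the minimum width. *)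

theory Defs
  imports Main
begin

text \<open>A digraph is given by a finite vertex set V and an arc set E \<subseteq> V \<times> V
  without loops (multiple arcs are excluded automatically since E is a set).\<close>
definition digraph :: "'a set \<Rightarrow> ('a \<times> 'a) set \<Rightarrow> bool" where
  "digraph V E \<longleftrightarrow> finite V \<and> E \<subseteq> V \<times> V \<and> (\<forall>v. (v, v) \<notin> E)"

definition und :: "('a \<times> 'a) set \<Rightarrow> ('a \<times> 'a) set" where
  "und E = E \<union> E\<inverse>"

definition ucycle :: "('a \<times> 'a) set \<Rightarrow> 'a list \<Rightarrow> bool" where
  "ucycle U xs \<longleftrightarrow> length xs \<ge> 3 \<and> distinct xs
     \<and> (\<forall>i. Suc i < length xs \<longrightarrow> (xs ! i, xs ! Suc i) \<in> U)
     \<and> (last xs, hd xs) \<in> U"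

text \<open>The underlying graph of the digraph (V,E) is a tree: finite, nonempty, connected,
  acyclic, and no pair of opposite arcs (which would form a 2-cycle / double edge).\<close>
definition underlying_tree :: "'b set \<Rightarrow> ('b \<times> 'b) set \<Rightarrow> bool" where
  "underlying_tree V E \<longleftrightarrow> finite V \<and> V \<noteq> {} \<and> E \<subseteq> V \<times> V \<and> (\<forall>v. (v, v) \<notin> E)
     \<and> (\<forall>u v. (u, v) \<in> E \<longrightarrow> (v, u) \<notin> E)
     \<and> (\<forall>u\<in>V. \<forall>v\<in>V. (u, v) \<in> (und E)\<^sup>*)
     \<and> (\<nexists>xs. ucycle (und E) xs)"

definition out_tree :: "'b set \<Rightarrow> ('b \<times> 'b) set \<Rightarrow> bool" where
  "out_tree V E \<longleftrightarrow> underlying_tree V E \<and> (\<exists>r\<in>V. \<forall>v\<in>V. (r, v) \<in> E\<^sup>*)"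

definition walk_avoiding :: "'a set \<Rightarrow> ('a \<times> 'a) set \<Rightarrow> 'a set \<Rightarrow> 'a list \<Rightarrow> bool" where
  "walk_avoiding V E Z w \<longleftrightarrow> w \<noteq> [] \<and> set w \<subseteq> V - Z
     \<and> (\<forall>i. Suc i < length w \<longrightarrow> (w ! i, w ! Suc i) \<in> E)"

definition normal :: "'a set \<Rightarrow> ('a \<times> 'a) set \<Rightarrow> 'a set \<Rightarrow> 'a set \<Rightarrow> bool" where
  "normal V E Z S \<longleftrightarrow> (\<nexists>w. walk_avoiding V E Z w \<and> hd w \<in> S \<and> last w \<in> S
                            \<and> (\<exists>x\<in>set w. x \<in> V - (Z \<union> S)))"

definition is_dtd :: "'a set \<Rightarrow> ('a \<times> 'a) set \<Rightarrow> nat set \<Rightarrow> (nat \<times> nat) set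
    \<Rightarrow> (nat \<times> nat \<Rightarrow> 'a set) \<Rightarrow> (nat \<Rightarrow> 'a set) \<Rightarrow> bool" where
  "is_dtd V E VT ET X W \<longleftrightarrow> out_tree VT ET
     \<and> (\<forall>e\<in>ET. X e \<subseteq> V)
     \<and> (\<forall>r\<in>VT. W r \<noteq> {} \<and> W r \<subseteq> V)
     \<and> (\<forall>r\<in>VT. \<forall>s\<in>VT. r \<noteq> s \<longrightarrow> W r \<inter> W s = {})
     \<and> (\<Union>r\<in>VT. W r) = V
     \<and> (\<forall>(u, v)\<in>ET. normal V E (X (u, v)) (\<Union>{W r |r. r \<in> VT \<and> (v, r) \<in> ET\<^sup>*}))"

definition dtd_width :: "nat set \<Rightarrow> (nat \<times> nat) set
    \<Rightarrow> (nat \<times> nat \<Rightarrow> 'a set) \<Rightarrow> (nat \<Rightarrow> 'a set) \<Rightarrow> nat" where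
  "dtd_width VT ET X W =
     Max ((\<lambda>r. card (W r \<union> \<Union>{X e |e. e \<in> ET \<and> (fst e = r \<or> snd e = r)})) ` VT) - 1"

definition directed_tree_width :: "'a set \<Rightarrow> ('a \<times> 'a) set \<Rightarrow> nat" where
  "directed_tree_width V E =
     (LEAST w. \<exists>VT ET X W. is_dtd V E VT ET X W \<and> dtd_width VT ET X W = w)"

end

theory Submission
  imports Defs
begin


lemma und_insert: "und (insert (a,b) R) = und R \<union> {(a,b),(b,a)}"
  unfolding und_def by auto

lemma ucycle_mono_avoid:
  assumes "ucycle (und R \<union> {(r,n),(n,r)}) xs" "n \<notin> set xs"
  shows "ucycle (und R) xs"
proof -
  from assms(1) have L: "length xs \<ge> 3" by (simp add: ucycle_def)
  have "\<forall>i. Suc i < length xs \<longrightarrow> (xs ! i, xs ! Suc i) \<in> und R"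
  proof (intro allI impI)
    fix i assume i: "Suc i < length xs"
    hence "(xs ! i, xs ! Suc i) \<in> und R \<union> {(r,n),(n,r)}" using assms(1) by (simp add: ucycle_def)
    moreover have "xs ! i \<noteq> n" "xs ! Suc i \<noteq> n" using i assms(2) nth_mem
      by (metis Suc_lessD)+
    ultimately show "(xs ! i, xs ! Suc i) \<in> und R" by auto
  qed
  moreover have "xs \<noteq> []" using L by auto
  hence "last xs \<noteq> n" "hd xs \<noteq> n" using assms(2) by auto
  moreover have "(last xs, hd xs) \<in> und R \<union> {(r,n),(n,r)}" using assms(1) by (simp add: ucycle_def)
  ultimately show ?thesis using assms(1) unfolding ucycle_def by auto
qed

lemma ucycle_pendant:
  assumes U: "ucycle (und R \<union> {(r,n),(n,r)}) xs" and nR: "\<forall>(a,b)\<in>R. a \<noteq> n \<and> b \<noteq> n"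
    and rn: "r \<noteq> n"
  shows "n \<notin> set xs"
proof
  assume "n \<in> set xs"
  then obtain i where i: "i < length xs" "xs ! i = n" by (metis in_set_conv_nth)
  let ?U = "und R \<union> {(r,n),(n,r)}"
  have adj1: "y = r" if "(n,y) \<in> ?U" for y using that nR unfolding und_def by auto
  have adj2: "y = r" if "(y,n) \<in> ?U" for y using that nR unfolding und_def by auto
  define L where "L = length xs"
  have L: "L \<ge> 3" "distinct xs" using U by (auto simp: ucycle_def L_def)
  have step: "\<And>j. Suc j < L \<Longrightarrow> (xs ! j, xs ! Suc j) \<in> ?U" using U unfolding ucycle_def L_def by blast
  have wrap: "(last xs, hd xs) \<in> ?U" using U unfolding ucycle_def by blast
  have ne: "xs \<noteq> []" using L unfolding L_def by auto
  have hd0: "hd xs = xs ! 0" using ne by (simp add: hd_conv_nth)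
  have lastL: "last xs = xs ! (L - 1)" using ne unfolding L_def by (simp add: last_conv_nth)
  define a where "a = (if Suc i < L then Suc i else 0)"
  define b where "b = (if i > 0 then i - 1 else L - 1)"
  have ab: "a < L" "b < L" "a \<noteq> b" using L i unfolding a_def b_def L_def by auto
  have "(n, xs ! a) \<in> ?U"
  proof (cases "Suc i < L")
    case True
    then show ?thesis using step[OF True] i unfolding a_def by simp
  next
    case False
    hence "i = L - 1" using i unfolding L_def by simp
    hence "last xs = n" using lastL i by simp
    then show ?thesis using wrap hd0 False unfolding a_def by simp
  qed
  hence ra: "xs ! a = r" by (rule adj1)
  have "(xs ! b, n) \<in> ?U"
  proof (cases "i > 0")
    case True
    hence "Suc (i - 1) < L" "Suc (i - 1) = i" using i unfolding L_def by auto
    hence "(xs ! (i-1), xs ! i) \<in> ?U" using step by metis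
    then show ?thesis using True i unfolding b_def by simp
  next
    case False
    hence "hd xs = n" using i hd0 by simp
    then show ?thesis using wrap lastL False unfolding b_def by simp
  qed
  hence rb: "xs ! b = r" by (rule adj2)
  have "xs ! a \<noteq> xs ! b" using nth_eq_iff_index_eq ab L unfolding L_def by blast
  thus False using ra rb by simp
qed

lemma out_tree_add_leaf:
  assumes T: "out_tree VT ET" and r: "r \<in> VT" and n: "n \<notin> VT"
  shows "out_tree (insert n VT) (insert (r,n) ET)"
proof -
  have ut: "underlying_tree VT ET" and root: "\<exists>r0\<in>VT. \<forall>v\<in>VT. (r0, v) \<in> ET\<^sup>*"
    using T by (auto simp: out_tree_def)
  have sub: "ET \<subseteq> VT \<times> VT" using ut by (simp add: underlying_tree_def)
  have rn: "r \<noteq> n" using r n by auto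
  have nR: "\<forall>(a,b)\<in>ET. a \<noteq> n \<and> b \<noteq> n" using sub n by auto
  have nocyc: "\<nexists>xs. ucycle (und (insert (r,n) ET)) xs"
  proof
    assume "\<exists>xs. ucycle (und (insert (r,n) ET)) xs"
    then obtain xs where xs: "ucycle (und ET \<union> {(r,n),(n,r)}) xs" by (auto simp: und_insert)
    hence "n \<notin> set xs" using ucycle_pendant nR rn by metis
    hence "ucycle (und ET) xs" using ucycle_mono_avoid xs by metis
    thus False using ut by (auto simp: underlying_tree_def)
  qed
  have mono: "(und ET)\<^sup>* \<subseteq> (und (insert (r,n) ET))\<^sup>*"
    by (rule rtrancl_mono) (auto simp: und_def)
  have e1: "(n, r) \<in> und (insert (r,n) ET)" "(r, n) \<in> und (insert (r,n) ET)" by (auto simp: und_def)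
  have conn: "\<forall>u\<in>insert n VT. \<forall>v\<in>insert n VT. (u, v) \<in> (und (insert (r,n) ET))\<^sup>*"
  proof (intro ballI)
    fix u v assume u: "u \<in> insert n VT" and v: "v \<in> insert n VT"
    have old: "(x, y) \<in> (und (insert (r,n) ET))\<^sup>*" if "x \<in> VT" "y \<in> VT" for x y
      using that ut mono unfolding underlying_tree_def by blast
    have a: "(x, n) \<in> (und (insert (r,n) ET))\<^sup>*" if "x \<in> VT" for x
      using old[OF that r] e1(2) by (meson rtrancl.rtrancl_into_rtrancl)
    have b: "(n, x) \<in> (und (insert (r,n) ET))\<^sup>*" if "x \<in> VT" for x
      using old[OF r that] e1(1) by (meson converse_rtrancl_into_rtrancl)
    show "(u, v) \<in> (und (insert (r,n) ET))\<^sup>*"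
    proof (cases "u = n")
      case True
      then show ?thesis using v b by (cases "v = n") auto
    next
      case False
      then show ?thesis using u v old a by (cases "v = n") auto
    qed
  qed
  have ut': "underlying_tree (insert n VT) (insert (r,n) ET)"
  proof -
    have "finite (insert n VT)" "insert n VT \<noteq> {}" using ut by (auto simp: underlying_tree_def)
    moreover have "insert (r,n) ET \<subseteq> insert n VT \<times> insert n VT" using sub r by auto
    moreover have "\<forall>v. (v, v) \<notin> insert (r,n) ET" using ut rn by (auto simp: underlying_tree_def)
    moreover have "\<forall>u v. (u, v) \<in> insert (r,n) ET \<longrightarrow> (v, u) \<notin> insert (r,n) ET"
      using ut rn nR unfolding underlying_tree_def by blast
    ultimately show ?thesis using nocyc conn unfolding underlying_tree_def by blast
  qed
  from root obtain r0 where r0: "r0 \<in> VT" "\<forall>v\<in>VT. (r0, v) \<in> ET\<^sup>*" by blast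
  have m2: "ET\<^sup>* \<subseteq> (insert (r,n) ET)\<^sup>*" by (rule rtrancl_mono) auto
  have "(r0, n) \<in> (insert (r,n) ET)\<^sup>*"
    using r0 r m2 by (meson insertI1 rtrancl.rtrancl_into_rtrancl subsetD)
  hence H: "\<forall>v\<in>insert n VT. (r0, v) \<in> (insert (r,n) ET)\<^sup>*" using r0 m2 by auto
  have r0': "r0 \<in> insert n VT" using r0 by simp
  show ?thesis unfolding out_tree_def by (rule conjI[OF ut' bexI[of "\<lambda>x. \<forall>v\<in>insert n VT. (x, v) \<in> (insert (r,n) ET)\<^sup>*", OF H r0']])
qed



lemma reach_from_new:
  assumes "n \<notin> VT" "ET \<subseteq> VT \<times> VT" "r \<noteq> n" "(n,s) \<in> (insert (r,n) ET)\<^sup>*"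
  shows "s = n"
  using assms(4)
proof (induction rule: rtrancl_induct)
  case base then show ?case by simp
next
  case (step y z) then show ?case using assms(1-3) by auto
qed

lemma reach_new:
  assumes "n \<notin> VT" "ET \<subseteq> VT \<times> VT" "r \<in> VT" "v \<in> VT"
  shows "(v,s) \<in> (insert (r,n) ET)\<^sup>* \<longleftrightarrow> ((v,s) \<in> ET\<^sup>* \<or> (s = n \<and> (v,r) \<in> ET\<^sup>*))"
proof
  assume "(v,s) \<in> (insert (r,n) ET)\<^sup>*"
  then show "(v,s) \<in> ET\<^sup>* \<or> (s = n \<and> (v,r) \<in> ET\<^sup>*)"
  proof (induction rule: rtrancl_induct)
    case base then show ?case by simp
  next
    case (step y z)
    from step.hyps(2) have "(y,z) = (r,n) \<or> (y,z) \<in> ET" by auto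
    then show ?case
    proof
      assume "(y,z) = (r,n)"
      then show ?thesis using step.IH assms by auto
    next
      assume yz: "(y,z) \<in> ET"
      hence "y \<in> VT" using assms(2) by auto
      hence "y \<noteq> n" using assms(1) by auto
      hence "(v,y) \<in> ET\<^sup>*" using step.IH by auto
      thus ?thesis using yz by (meson rtrancl.rtrancl_into_rtrancl)
    qed
  qed
next
  have m: "ET\<^sup>* \<subseteq> (insert (r,n) ET)\<^sup>*" by (rule rtrancl_mono) auto
  assume "(v,s) \<in> ET\<^sup>* \<or> (s = n \<and> (v,r) \<in> ET\<^sup>*)"
  then show "(v,s) \<in> (insert (r,n) ET)\<^sup>*"
  proof
    assume "(v,s) \<in> ET\<^sup>*" then show ?thesis using m by auto
  next
    assume "s = n \<and> (v,r) \<in> ET\<^sup>*"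
    then show ?thesis using m by (meson insertI1 rtrancl.rtrancl_into_rtrancl subsetD)
  qed
qed

lemma dtd_step:
  assumes D: "is_dtd V E VT ET X W" and r: "r \<in> VT" "w \<in> W r" "W r \<noteq> {w}" and n: "n \<notin> VT"
  shows "is_dtd V E (insert n VT) (insert (r,n) ET) (X((r,n) := {w})) (W(r := W r - {w}, n := {w}))"
proof -
  define W' where "W' = W(r := W r - {w}, n := {w})"
  define X' where "X' = X((r,n) := {w})"
  define ET' where "ET' = insert (r,n) ET"
  have T: "out_tree VT ET" using D by (simp add: is_dtd_def)
  have sub: "ET \<subseteq> VT \<times> VT" using T by (simp add: out_tree_def underlying_tree_def)
  have rn: "r \<noteq> n" using r n by auto
  have T': "out_tree (insert n VT) ET'" using out_tree_add_leaf[OF T r(1) n] by (simp add: ET'_def)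
  have WV: "\<forall>s\<in>VT. W s \<noteq> {} \<and> W s \<subseteq> V" and Wd: "\<forall>s\<in>VT. \<forall>t\<in>VT. s \<noteq> t \<longrightarrow> W s \<inter> W t = {}"
    and WU: "(\<Union>s\<in>VT. W s) = V" and XV: "\<forall>e\<in>ET. X e \<subseteq> V"
    and NO: "\<forall>(u, v)\<in>ET. normal V E (X (u, v)) (\<Union>{W s |s. s \<in> VT \<and> (v, s) \<in> ET\<^sup>*})"
    using D by (auto simp: is_dtd_def)
  have wV: "w \<in> V" using WV r by auto
  have c1: "\<forall>e\<in>ET'. X' e \<subseteq> V" using XV wV by (auto simp: X'_def ET'_def)
  have c2: "\<forall>s\<in>insert n VT. W' s \<noteq> {} \<and> W' s \<subseteq> V" using WV wV r rn n by (auto simp: W'_def)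
  have c3: "\<forall>s\<in>insert n VT. \<forall>t\<in>insert n VT. s \<noteq> t \<longrightarrow> W' s \<inter> W' t = {}"
  proof (intro ballI impI)
    fix s t assume s: "s \<in> insert n VT" and t: "t \<in> insert n VT" and st: "s \<noteq> t"
    have wn: "w \<notin> W q" if "q \<in> VT" "q \<noteq> r" for q using Wd r that by blast
    show "W' s \<inter> W' t = {}" using s t st Wd wn rn n r unfolding W'_def by auto
  qed
  have c4: "(\<Union>s\<in>insert n VT. W' s) = V"
  proof -
    have "(\<Union>s\<in>insert n VT. W' s) = W' n \<union> W' r \<union> (\<Union>s\<in>VT - {r}. W' s)" using r by auto
    also have "(\<Union>s\<in>VT - {r}. W' s) = (\<Union>s\<in>VT - {r}. W s)" using n unfolding W'_def by auto
    also have "W' n \<union> W' r = W r" using rn r unfolding W'_def by auto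
    also have "W r \<union> (\<Union>s\<in>VT - {r}. W s) = (\<Union>s\<in>VT. W s)" using r by auto
    finally show ?thesis using WU by simp
  qed
  have c5: "\<forall>(u, v)\<in>ET'. normal V E (X' (u, v)) (\<Union>{W' s |s. s \<in> insert n VT \<and> (v, s) \<in> ET'\<^sup>*})"
  proof (intro ballI)
    fix e assume e: "e \<in> ET'"
    obtain u v where uv: "e = (u,v)" by fastforce
    show "case e of (u, v) \<Rightarrow> normal V E (X' (u, v)) (\<Union>{W' s |s. s \<in> insert n VT \<and> (v, s) \<in> ET'\<^sup>*})"
    proof (cases "e = (r,n)")
      case True
      hence "u = r" "v = n" using uv by auto
      have "\<Union>{W' s |s. s \<in> insert n VT \<and> (n, s) \<in> ET'\<^sup>*} = {w}"
      proof -
        have "\<And>s. (s \<in> insert n VT \<and> (n, s) \<in> ET'\<^sup>*) \<longleftrightarrow> s = n"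
          using reach_from_new[OF n sub rn] unfolding ET'_def by auto
        hence "{W' s |s. s \<in> insert n VT \<and> (n, s) \<in> ET'\<^sup>*} = {W' n}" by auto
        thus ?thesis unfolding W'_def by simp
      qed
      moreover have "normal V E {w} {w}" unfolding normal_def walk_avoiding_def
        by (metis Diff_iff hd_in_set insertI1 subset_iff)
      ultimately show ?thesis using True uv by (simp add: X'_def)
    next
      case False
      hence eE: "(u,v) \<in> ET" using e uv by (auto simp: ET'_def)
      hence v: "v \<in> VT" using sub by auto
      hence vn: "v \<noteq> n" using n by auto
      have X'eq: "X' (u,v) = X (u,v)" using vn by (simp add: X'_def)
      have R: "\<And>s. (v,s) \<in> ET'\<^sup>* \<longleftrightarrow> ((v,s) \<in> ET\<^sup>* \<or> (s = n \<and> (v,r) \<in> ET\<^sup>*))"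
        using reach_new[OF n sub r(1) v] by (simp add: ET'_def)
      have Seq: "\<Union>{W' s |s. s \<in> insert n VT \<and> (v, s) \<in> ET'\<^sup>*} = \<Union>{W s |s. s \<in> VT \<and> (v, s) \<in> ET\<^sup>*}"
      proof (cases "(v,r) \<in> ET\<^sup>*")
        case True
        show ?thesis
        proof
          show "\<Union>{W' s |s. s \<in> insert n VT \<and> (v, s) \<in> ET'\<^sup>*} \<subseteq> \<Union>{W s |s. s \<in> VT \<and> (v, s) \<in> ET\<^sup>*}"
          proof
            fix x assume "x \<in> \<Union>{W' s |s. s \<in> insert n VT \<and> (v, s) \<in> ET'\<^sup>*}"
            then obtain s where s: "s \<in> insert n VT" "(v, s) \<in> ET'\<^sup>*" "x \<in> W' s" by blast
            show "x \<in> \<Union>{W s |s. s \<in> VT \<and> (v, s) \<in> ET\<^sup>*}"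
            proof (cases "s = n")
              case True
              hence "x \<in> W r" using s r unfolding W'_def by auto
              thus ?thesis using \<open>(v,r) \<in> ET\<^sup>*\<close> r by blast
            next
              case False
              hence "s \<in> VT" "(v,s) \<in> ET\<^sup>*" "x \<in> W s" using s R unfolding W'_def
                by (auto split: if_splits)
              thus ?thesis by blast
            qed
          qed
        next
          show "\<Union>{W s |s. s \<in> VT \<and> (v, s) \<in> ET\<^sup>*} \<subseteq> \<Union>{W' s |s. s \<in> insert n VT \<and> (v, s) \<in> ET'\<^sup>*}"
          proof
            fix x assume "x \<in> \<Union>{W s |s. s \<in> VT \<and> (v, s) \<in> ET\<^sup>*}"
            then obtain s where s: "s \<in> VT" "(v, s) \<in> ET\<^sup>*" "x \<in> W s" by blast
            have sv: "(v,s) \<in> ET'\<^sup>*" using R s by auto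
            have nv: "(v,n) \<in> ET'\<^sup>*" using R True by auto
            show "x \<in> \<Union>{W' s |s. s \<in> insert n VT \<and> (v, s) \<in> ET'\<^sup>*}"
            proof (cases "s = r \<and> x = w")
              case True
              hence "x \<in> W' n" unfolding W'_def by simp
              thus ?thesis using nv by blast
            next
              case False
              hence "x \<in> W' s" using s n unfolding W'_def by auto
              thus ?thesis using sv s by blast
            qed
          qed
        qed
      next
        case False
        hence R2: "\<And>s. (v,s) \<in> ET'\<^sup>* \<longleftrightarrow> (v,s) \<in> ET\<^sup>*" using R by auto
        have "r \<noteq> s" if "(v,s) \<in> ET\<^sup>*" for s using that False by auto
        moreover have "s \<in> VT" if "(v,s) \<in> ET\<^sup>*" for s
          using that v sub by (cases rule: rtrancl.cases) auto
        ultimately have A: "\<And>s. (s \<in> insert n VT \<and> (v, s) \<in> ET'\<^sup>*) \<longleftrightarrow> (s \<in> VT \<and> (v, s) \<in> ET\<^sup>*)"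
          and B: "\<And>s. s \<in> VT \<and> (v, s) \<in> ET\<^sup>* \<Longrightarrow> W' s = W s"
          using R2 n unfolding W'_def by auto
        have "{W' s |s. s \<in> insert n VT \<and> (v, s) \<in> ET'\<^sup>*} = {W s |s. s \<in> VT \<and> (v, s) \<in> ET\<^sup>*}"
          unfolding A using B by metis
        thus ?thesis by simp
      qed
      have "normal V E (X (u, v)) (\<Union>{W s |s. s \<in> VT \<and> (v, s) \<in> ET\<^sup>*})" using NO eE by auto
      thus ?thesis using uv X'eq Seq by simp
    qed
  qed
  show ?thesis using T' c1 c2 c3 c4 c5 unfolding is_dtd_def W'_def X'_def ET'_def by blast
qed



lemma width_step:
  assumes D: "is_dtd V E VT ET X W" and r: "r \<in> VT" and wr: "w \<in> W r" and finV: "finite V" and n: "n \<notin> VT"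
  shows "dtd_width (insert n VT) (insert (r,n) ET) (X((r,n) := {w})) (W(r := W r - {w}, n := {w}))
         \<le> dtd_width VT ET X W"
proof -
  define W' where "W' = W(r := W r - {w}, n := {w})"
  define X' where "X' = X((r,n) := {w})"
  define ET' where "ET' = insert (r,n) ET"
  have T: "out_tree VT ET" using D by (simp add: is_dtd_def)
  have sub: "ET \<subseteq> VT \<times> VT" and fin: "finite VT"
    using T by (auto simp: out_tree_def underlying_tree_def)
  have WV: "\<forall>s\<in>VT. W s \<noteq> {} \<and> W s \<subseteq> V" and XV: "\<forall>e\<in>ET. X e \<subseteq> V"
    using D by (auto simp: is_dtd_def)
  define f where "f = (\<lambda>s. card (W s \<union> \<Union>{X e |e. e \<in> ET \<and> (fst e = s \<or> snd e = s)}))"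
  define f' where "f' = (\<lambda>s. card (W' s \<union> \<Union>{X' e |e. e \<in> ET' \<and> (fst e = s \<or> snd e = s)}))"
  have fn: "f' n \<le> 1"
  proof -
    have "\<And>e. e \<in> ET' \<and> (fst e = n \<or> snd e = n) \<longleftrightarrow> e = (r,n)"
      using sub n r unfolding ET'_def by auto
    hence "W' n \<union> \<Union>{X' e |e. e \<in> ET' \<and> (fst e = n \<or> snd e = n)} = {w}"
      unfolding W'_def X'_def by auto
    thus ?thesis unfolding f'_def by simp
  qed
  have fs: "f' s \<le> f s" if s: "s \<in> VT" for s
  proof -
    have "W' s \<union> \<Union>{X' e |e. e \<in> ET' \<and> (fst e = s \<or> snd e = s)}
        \<subseteq> W s \<union> \<Union>{X e |e. e \<in> ET \<and> (fst e = s \<or> snd e = s)}"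
    proof
      fix x assume x: "x \<in> W' s \<union> \<Union>{X' e |e. e \<in> ET' \<and> (fst e = s \<or> snd e = s)}"
      show "x \<in> W s \<union> \<Union>{X e |e. e \<in> ET \<and> (fst e = s \<or> snd e = s)}"
      proof (cases "x \<in> W' s")
        case True
        then show ?thesis using s n unfolding W'_def by (auto split: if_splits)
      next
        case False
        then obtain e where e: "e \<in> ET'" "fst e = s \<or> snd e = s" "x \<in> X' e" using x by blast
        show ?thesis
        proof (cases "e = (r,n)")
          case True
          hence "x = w" "s = r" using e s n unfolding X'_def by auto
          moreover have "x \<notin> W' s" by (rule False)
          ultimately show ?thesis using n r wr unfolding W'_def by auto
        next
          case False
          hence "e \<in> ET" "x \<in> X e" using e unfolding ET'_def X'_def by auto
          thus ?thesis using e by blast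
        qed
      qed
    qed
    moreover have "finite (W s \<union> \<Union>{X e |e. e \<in> ET \<and> (fst e = s \<or> snd e = s)})"
    proof -
      have "W s \<subseteq> V" using WV s by blast
      moreover have "\<Union>{X e |e. e \<in> ET \<and> (fst e = s \<or> snd e = s)} \<subseteq> V"
        using XV by blast
      ultimately show ?thesis by (intro finite_subset[OF _ finV] Un_least)
    qed
    ultimately show ?thesis unfolding f_def f'_def by (rule card_mono[rotated])
  qed
  have ne: "VT \<noteq> {}" using r by auto
  have "\<forall>s\<in>VT. f' s \<le> Max (f ` VT)"
  proof
    fix s assume s: "s \<in> VT"
    have "f s \<le> Max (f ` VT)" using fin s by (intro Max_ge) auto
    thus "f' s \<le> Max (f ` VT)" using fs[OF s] by linarith
  qed
  hence "Max (f' ` VT) \<le> Max (f ` VT)" using fin ne by (subst Max_le_iff) auto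
  moreover have "Max (f' ` insert n VT) = max (f' n) (Max (f' ` VT))"
    using fin ne by (simp add: Max_insert)
  ultimately have "Max (f' ` insert n VT) \<le> max 1 (Max (f ` VT))"
    using fn by linarith
  hence "Max (f' ` insert n VT) - 1 \<le> Max (f ` VT) - 1" by linarith
  thus ?thesis unfolding dtd_width_def f_def f'_def W'_def X'_def ET'_def .
qed

lemma refine:
  assumes finV: "finite V"
  shows "is_dtd V E VT ET X W \<Longrightarrow> \<exists>VT' ET' X' W'. is_dtd V E VT' ET' X' W'
           \<and> dtd_width VT' ET' X' W' \<le> dtd_width VT ET X W \<and> (\<forall>r\<in>VT'. card (W' r) = 1)"
proof (induction "\<Sum>r\<in>VT. (card (W r) - 1)" arbitrary: VT ET X W rule: less_induct)
  case less
  have D: "is_dtd V E VT ET X W" by fact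
  have "out_tree VT ET" using D by (simp add: is_dtd_def)
  hence fin: "finite VT" by (simp add: out_tree_def underlying_tree_def)
  have WV: "\<forall>s\<in>VT. W s \<noteq> {} \<and> W s \<subseteq> V" using D by (auto simp: is_dtd_def)
  show ?case
  proof (cases "\<forall>r\<in>VT. card (W r) = 1")
    case True
    then show ?thesis using D by (intro exI[of _ VT] exI[of _ ET] exI[of _ X] exI[of _ W]) simp
  next
    case False
    then obtain r where r: "r \<in> VT" "card (W r) \<noteq> 1" by blast
    have finW: "finite (W r)" using WV r finV finite_subset by blast
    obtain w where w: "w \<in> W r" using WV r by blast
    have wne: "W r \<noteq> {w}" using r by auto
    have "card (W r) \<noteq> 0" using finW w by auto
    hence c2: "card (W r) \<ge> 2" using r(2) by linarith
    define n where "n = Suc (Max VT)"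
    have n: "n \<notin> VT"
    proof
      assume "n \<in> VT" hence "n \<le> Max VT" using fin by simp
      thus False unfolding n_def by simp
    qed
    define W' where "W' = W(r := W r - {w}, n := {w})"
    define X' where "X' = X((r,n) := {w})"
    have D': "is_dtd V E (insert n VT) (insert (r,n) ET) X' W'"
      using dtd_step[OF D r(1) w wne n] unfolding W'_def X'_def .
    have Wd: "dtd_width (insert n VT) (insert (r,n) ET) X' W' \<le> dtd_width VT ET X W"
      using width_step[OF D r(1) w finV n] unfolding W'_def X'_def .
    have rn: "r \<noteq> n" using r n by auto
    have "(\<Sum>s\<in>insert n VT. card (W' s) - 1) = (card (W' n) - 1) + (\<Sum>s\<in>VT. card (W' s) - 1)"
      using fin n by simp
    also have "card (W' n) - 1 = 0" unfolding W'_def by simp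
    also have "(\<Sum>s\<in>VT. card (W' s) - 1) = (card (W' r) - 1) + (\<Sum>s\<in>VT - {r}. card (W' s) - 1)"
      using fin r by (simp add: sum.remove)
    also have "(\<Sum>s\<in>VT - {r}. card (W' s) - 1) = (\<Sum>s\<in>VT - {r}. card (W s) - 1)"
      using n unfolding W'_def by (intro sum.cong) auto
    also have "card (W' r) - 1 = card (W r) - 2" using rn finW w unfolding W'_def by simp
    finally have "(\<Sum>s\<in>insert n VT. card (W' s) - 1) < (card (W r) - 1) + (\<Sum>s\<in>VT - {r}. card (W s) - 1)"
      using c2 by simp
    also have "\<dots> = (\<Sum>s\<in>VT. card (W s) - 1)" using fin r by (simp add: sum.remove)
    finally have lt: "(\<Sum>s\<in>insert n VT. card (W' s) - 1) < (\<Sum>s\<in>VT. card (W s) - 1)" .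
    obtain VT2 ET2 X2 W2 where R: "is_dtd V E VT2 ET2 X2 W2"
        "dtd_width VT2 ET2 X2 W2 \<le> dtd_width (insert n VT) (insert (r,n) ET) X' W'"
        "\<forall>r\<in>VT2. card (W2 r) = 1"
      using less.hyps[OF lt D'] by blast
    show ?thesis using R Wd by (meson le_trans)
  qed
qed

lemma trivial_dtd:
  assumes "V \<noteq> {}"
  shows "is_dtd V E {0} {} (\<lambda>_. {}) (\<lambda>_. V)"
proof -
  have "\<not> ucycle (und {}) xs" for xs :: "nat list"
    unfolding ucycle_def und_def by auto
  hence "underlying_tree {0::nat} {}" unfolding underlying_tree_def by auto
  hence "out_tree {0::nat} {}" unfolding out_tree_def by auto
  thus ?thesis using assms unfolding is_dtd_def by auto
qed

theorem lemma4p8: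
  fixes V :: "'a set" and E :: "('a \<times> 'a) set" and k :: nat
  assumes "digraph V E" and "V \<noteq> {}"
    and "directed_tree_width V E \<le> k"
  shows "\<exists>VT ET X W. is_dtd V E VT ET X W \<and> dtd_width VT ET X W \<le> k
            \<and> (\<forall>r\<in>VT. card (W r) = 1)"
  proof -
  have finV: "finite V" using assms(1) by (simp add: digraph_def)
  have ex: "\<exists>w VT ET X W. is_dtd V E VT ET X W \<and> dtd_width VT ET X W = w"
    using trivial_dtd[OF assms(2)] by blast
  then obtain VT ET X W where D: "is_dtd V E VT ET X W"
      and w: "dtd_width VT ET X W = directed_tree_width V E"
    unfolding directed_tree_width_def using LeastI_ex[OF ex] by blast
  obtain VT' ET' X' W' where R: "is_dtd V E VT' ET' X' W'"
      "dtd_width VT' ET' X' W' \<le> dtd_width VT ET X W" "\<forall>r\<in>VT'. card (W' r) = 1"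
    using refine[OF finV D] by blast
  show ?thesis using R w assms(3) by (metis le_trans)
qed

end
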